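(* Let $\overline{X}$ be a set, let $k$ divide $T$, and for each interval $j=1,\dots,T/k$ let $f_{j,1},\dots,f_{j,k}:\overline{X}\to[0,n]$ be functions fixed in advance. In the random-costs setting, in each interval $j$ a learner chooses $x_j\in\overline{X}$ (depending only on its own randomness and on previously observed functions), then an index $i_j$ is drawn uniformly from $\{1,\dots,k\}$ independently of everything else, and the learner observes and incurs $f^r_j:=f_{j,i_j}$ at $x_j$. In the corresponding average-costs setting the cost function of interval $j$ is $\overline{f}_j:=\frac1k\sum_{i=1}^k f_{j,i}$. If the learner's strategy has expected average regret at most $R(T)$ in the random-costs setting, i.e. $\frac1T\mathbb{E}\big[\sum_j f^r_j(x_j)-\min_{x\in\overline{X}}\sum_j f^r_j(x)\big]\le R(T)$, then the same strategy (played against the functions $\overline{f}_j$) satisfies $\frac1T\Big(\mathbb{E}\Big[\sum_{j=1}^{T/k}\overline{f}_j(x_j)\Big]-\min_{x\in\overline{X}}\sum_{j=1}^{T/k}\overline{f}_j(x)\Big)\le R(T)+\frac{n}{\sqrt{kT}}.$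
   Context: Sums over $j$ range over the $T/k$ intervals; expectations are over the random indices $i_j$ and the learner's randomness. *)

theory Defs
  imports "HOL-Probability.Probability"
begin

text \<open>Index sequences (i_1,...,i_m), each i_j in {0..<k} (0-based), m = T/k intervals.\<close>
definition idx_seqs :: "nat \<Rightarrow> nat \<Rightarrow> nat list set" where
  "idx_seqs k m = {is. length is = m \<and> set is \<subseteq> {0..<k}}"

text \<open>Expectation over i.i.d. uniform indices (uniform over all index sequences).\<close>
definition idx_avg :: "nat \<Rightarrow> nat \<Rightarrow> (nat list \<Rightarrow> real) \<Rightarrow> real" where
  "idx_avg k m g = (\<Sum>is\<in>idx_seqs k m. g is) / real (card (idx_seqs k m))"

definition fbar :: "nat \<Rightarrow> (nat \<Rightarrow> nat \<Rightarrow> 'a \<Rightarrow> real) \<Rightarrow> nat \<Rightarrow> 'a \<Rightarrow> real" where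
  "fbar k f j x = (\<Sum>i<k. f j i x) / real k"

end

theory Submission
  imports Defs
begin

lemma idx_seqs_finite: "finite (idx_seqs k m)"
proof -
  have "idx_seqs k m = {xs. set xs \<subseteq> {0..<k} \<and> length xs = m}" by (auto simp: idx_seqs_def)
  then show ?thesis using finite_lists_length_eq[of "{0..<k}" m] by simp
qed

lemma idx_seqs_Suc: "idx_seqs k (Suc m) = (\<lambda>(xs,i). xs@[i]) ` (idx_seqs k m \<times> {..<k})"
proof
  show "idx_seqs k (Suc m) \<subseteq> (\<lambda>(xs,i). xs@[i]) ` (idx_seqs k m \<times> {..<k})"
  proof
    fix ys assume ys: "ys \<in> idx_seqs k (Suc m)"
    then have ne: "ys \<noteq> []" by (auto simp: idx_seqs_def)
    then have e: "ys = butlast ys @ [last ys]" by simp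
    have "set ys \<subseteq> {0..<k}" "length ys = Suc m" using ys by (auto simp: idx_seqs_def)
    moreover have "set (butlast ys) \<subseteq> set ys" by (meson in_set_butlastD subsetI)
    moreover have "last ys \<in> set ys" using ne by simp
    ultimately have "(butlast ys, last ys) \<in> idx_seqs k m \<times> {..<k}" by (auto simp: idx_seqs_def)
    then show "ys \<in> (\<lambda>(xs,i). xs@[i]) ` (idx_seqs k m \<times> {..<k})" using e by force
  qed
qed (auto simp: idx_seqs_def)

lemma sum_idx_Suc: "sum F (idx_seqs k (Suc m)) = (\<Sum>xs\<in>idx_seqs k m. \<Sum>i<k. F (xs@[i]))"
proof -
  have inj: "inj_on (\<lambda>(xs,i). xs@[i]) (idx_seqs k m \<times> {..<k})" by (auto simp: inj_on_def)
  have "sum F (idx_seqs k (Suc m)) = sum (F \<circ> (\<lambda>(xs,i). xs@[i])) (idx_seqs k m \<times> {..<k})"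
    unfolding idx_seqs_Suc by (rule sum.reindex[OF inj])
  also have "\<dots> = (\<Sum>(xs,i)\<in>idx_seqs k m \<times> {..<k}. F (xs@[i]))"
    by (intro sum.cong) auto
  also have "\<dots> = (\<Sum>xs\<in>idx_seqs k m. \<Sum>i<k. F (xs@[i]))"
    by (rule sum.cartesian_product[symmetric])
  finally show ?thesis .
qed

lemma key: "0 < k \<Longrightarrow> j < m \<Longrightarrow> (\<Sum>is\<in>idx_seqs k m. h (take j is) (is!j)) =
   (\<Sum>is\<in>idx_seqs k m. (\<Sum>i<k. h (take j is) i) / real k)"
proof (induction m)
  case 0 then show ?case by simp
next
  case (Suc m)
  show ?case
  proof (cases "j < m")
    case True
    have "(\<Sum>is\<in>idx_seqs k (Suc m). h (take j is) (is!j))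
        = (\<Sum>xs\<in>idx_seqs k m. \<Sum>i<k. h (take j xs) (xs!j))"
      unfolding sum_idx_Suc
      by (intro sum.cong refl) (use True in \<open>auto simp: idx_seqs_def nth_append\<close>)
    also have "\<dots> = real k * (\<Sum>xs\<in>idx_seqs k m. h (take j xs) (xs!j))"
      by (simp add: sum_distrib_left)
    also have "\<dots> = real k * (\<Sum>xs\<in>idx_seqs k m. (\<Sum>i<k. h (take j xs) i) / real k)"
      using Suc True by simp
    also have "\<dots> = (\<Sum>xs\<in>idx_seqs k m. \<Sum>i'<k. (\<Sum>i<k. h (take j (xs@[i'])) i) / real k)"
      by (simp add: sum_distrib_left) (intro sum.cong refl, use True in \<open>auto simp: idx_seqs_def sum_distrib_left[symmetric]\<close>)
    also have "\<dots> = (\<Sum>is\<in>idx_seqs k (Suc m). (\<Sum>i<k. h (take j is) i) / real k)"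
      unfolding sum_idx_Suc ..
    finally show ?thesis .
  next
    case False
    then have jm: "j = m" using Suc by simp
    have "(\<Sum>is\<in>idx_seqs k (Suc m). h (take j is) (is!j))
        = (\<Sum>xs\<in>idx_seqs k m. \<Sum>i<k. h xs i)"
      unfolding sum_idx_Suc
      by (intro sum.cong refl) (use jm in \<open>auto simp: idx_seqs_def nth_append\<close>)
    also have "\<dots> = (\<Sum>xs\<in>idx_seqs k m. \<Sum>i'<k. (\<Sum>i<k. h (take j (xs@[i'])) i) / real k)"
      by (rule sum.cong[OF refl]) (use jm Suc.prems in \<open>auto simp: idx_seqs_def\<close>)
    also have "\<dots> = (\<Sum>is\<in>idx_seqs k (Suc m). (\<Sum>i<k. h (take j is) i) / real k)"
      unfolding sum_idx_Suc ..
    finally show ?thesis .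
  qed
qed

lemma idx_seqs_ne: "idx_seqs k m \<noteq> {}" if "0 < k"
  using that by (auto simp: idx_seqs_def intro!: exI[of _ "replicate m 0"])

lemma sum_key: "0 < k \<Longrightarrow> (\<Sum>is\<in>idx_seqs k m. \<Sum>j<m. f j (is!j) (g j (take j is))) =
   (\<Sum>is\<in>idx_seqs k m. \<Sum>j<m. fbar k f j (g j (take j is)))"
proof -
  assume k: "0 < k"
  have "(\<Sum>is\<in>idx_seqs k m. \<Sum>j<m. f j (is!j) (g j (take j is)))
      = (\<Sum>j<m. \<Sum>is\<in>idx_seqs k m. f j (is!j) (g j (take j is)))" by (rule sum.swap)
  also have "\<dots> = (\<Sum>j<m. \<Sum>is\<in>idx_seqs k m. fbar k f j (g j (take j is)))"
  proof (rule sum.cong[OF refl])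
    fix j assume "j \<in> {..<m}"
    then show "(\<Sum>is\<in>idx_seqs k m. f j (is!j) (g j (take j is))) = (\<Sum>is\<in>idx_seqs k m. fbar k f j (g j (take j is)))"
      using key[OF k, of j m "\<lambda>p i. f j i (g j p)"] by (simp add: fbar_def)
  qed
  also have "\<dots> = (\<Sum>is\<in>idx_seqs k m. \<Sum>j<m. fbar k f j (g j (take j is)))" by (rule sum.swap)
  finally show ?thesis .
qed

theorem lemma4p2:
  fixes Xbar :: "'a set" and T k :: nat and n R :: real
    and f :: "nat \<Rightarrow> nat \<Rightarrow> 'a \<Rightarrow> real"
    and M :: "'r measure"
    and s :: "nat \<Rightarrow> nat list \<Rightarrow> 'r \<Rightarrow> 'a"
  assumes "Xbar \<noteq> {}"
    and "0 < k" and "k dvd T" and "0 < T"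
    and "\<And>j i x. j < T div k \<Longrightarrow> i < k \<Longrightarrow> x \<in> Xbar \<Longrightarrow> 0 \<le> f j i x \<and> f j i x \<le> n"
    and "prob_space M"
    and "\<And>j h r. j < T div k \<Longrightarrow> s j h r \<in> Xbar"
    and "\<And>j i h. j < T div k \<Longrightarrow> i < k \<Longrightarrow> (\<lambda>r. f j i (s j h r)) \<in> borel_measurable M"
    and random_regret:
      "(1 / real T) * (\<integral>r. idx_avg k (T div k)
          (\<lambda>is. (\<Sum>j<T div k. f j (is ! j) (s j (take j is) r))
                - (INF x\<in>Xbar. \<Sum>j<T div k. f j (is ! j) x)) \<partial>M) \<le> R"
  shows "(1 / real T) * ((\<integral>r. idx_avg k (T div k)
            (\<lambda>is. \<Sum>j<T div k. fbar k f j (s j (take j is) r)) \<partial>M)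
          - (INF x\<in>Xbar. \<Sum>j<T div k. fbar k f j x))
         \<le> R + n / sqrt (real k * real T)"
proof -
  let ?m = "T div k"
  interpret P: prob_space M by fact
  have k: "0 < k" by fact
  have m: "0 < ?m" using assms(2,3,4) by (auto elim!: dvdE)
  obtain x0 where x0: "x0 \<in> Xbar" using assms(1) by blast
  have n: "0 \<le> n" using assms(5)[OF m k x0] by linarith
  have fin: "finite (idx_seqs k ?m)" by (rule idx_seqs_finite)
  have cpos: "0 < real (card (idx_seqs k ?m))"
    using fin idx_seqs_ne[OF k] by (simp add: card_gt_0_iff)
  have ilt: "is ! j < k" if "is \<in> idx_seqs k ?m" "j < ?m" for "is" j
  proof -
    have l: "length is = ?m" "set is \<subseteq> {0..<k}" using that(1) by (auto simp: idx_seqs_def)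
    have "is ! j \<in> set is" using l(1) that(2) by (simp add: nth_mem)
    then show ?thesis using l(2) by auto
  qed
  define A where "A r = idx_avg k ?m (\<lambda>is. \<Sum>j<?m. f j (is ! j) (s j (take j is) r))" for r
  define C where "C = idx_avg k ?m (\<lambda>is. INF x\<in>Xbar. \<Sum>j<?m. f j (is ! j) x)"
  have AB: "A r = idx_avg k ?m (\<lambda>is. \<Sum>j<?m. fbar k f j (s j (take j is) r))" for r
    unfolding A_def idx_avg_def using sum_key[OF k, where m="?m" and f=f and g="\<lambda>j p. s j p r"] by simp
  have Adiff: "idx_avg k ?m (\<lambda>is. (\<Sum>j<?m. f j (is ! j) (s j (take j is) r))
                - (INF x\<in>Xbar. \<Sum>j<?m. f j (is ! j) x)) = A r - C" for r
    unfolding A_def C_def idx_avg_def by (simp add: sum_subtractf diff_divide_distrib)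
  have Ameas: "A \<in> borel_measurable M"
    unfolding A_def idx_avg_def
    by (intro borel_measurable_divide borel_measurable_sum borel_measurable_const)
       (auto intro: assms(8) ilt)
  have Abnd: "norm (A r) \<le> real ?m * n" for r
  proof -
    have "0 \<le> (\<Sum>is\<in>idx_seqs k ?m. \<Sum>j<?m. f j (is ! j) (s j (take j is) r))"
      by (intro sum_nonneg) (auto intro: assms(5)[THEN conjunct1] assms(7) ilt)
    moreover have "(\<Sum>is\<in>idx_seqs k ?m. \<Sum>j<?m. f j (is ! j) (s j (take j is) r))
        \<le> (\<Sum>is\<in>idx_seqs k ?m. \<Sum>j<?m. n)"
      by (intro sum_mono) (auto intro: assms(5)[THEN conjunct2] assms(7) ilt)
    ultimately show ?thesis using cpos unfolding A_def idx_avg_def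
      by (simp add: divide_le_eq mult.commute)
  qed
  have Aint: "integrable M A"
    by (rule P.integrable_const_bound[where B="real ?m * n"]) (use Abnd Ameas in auto)
  have hyp: "(1 / real T) * ((\<integral>r. A r \<partial>M) - C) \<le> R"
    using random_regret unfolding Adiff using Aint by (simp add: P.prob_space)
  have CI: "C \<le> (INF x\<in>Xbar. \<Sum>j<?m. fbar k f j x)"
  proof (rule cINF_greatest[OF assms(1)])
    fix x assume x: "x \<in> Xbar"
    have "C \<le> idx_avg k ?m (\<lambda>is. \<Sum>j<?m. f j (is ! j) x)"
      unfolding C_def idx_avg_def
    proof (intro divide_right_mono sum_mono)
      fix "is" assume "is": "is \<in> idx_seqs k ?m"
      show "(INF x\<in>Xbar. \<Sum>j<?m. f j (is ! j) x) \<le> (\<Sum>j<?m. f j (is ! j) x)"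
      proof (rule cINF_lower[OF _ x])
        show "bdd_below ((\<lambda>x. \<Sum>j<?m. f j (is ! j) x) ` Xbar)"
          by (rule bdd_belowI[where m=0]) (auto intro!: sum_nonneg assms(5)[THEN conjunct1] ilt[OF "is"])
      qed
    qed simp
    also have "\<dots> = idx_avg k ?m (\<lambda>is. \<Sum>j<?m. fbar k f j x)"
      unfolding idx_avg_def using sum_key[OF k, where m="?m" and f=f and g="\<lambda>j p. x"] by simp
    also have "\<dots> = (\<Sum>j<?m. fbar k f j x)"
      unfolding idx_avg_def using cpos by simp
    finally show "C \<le> (\<Sum>j<?m. fbar k f j x)" .
  qed
  have "(1 / real T) * ((\<integral>r. idx_avg k ?m (\<lambda>is. \<Sum>j<?m. fbar k f j (s j (take j is) r)) \<partial>M)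
          - (INF x\<in>Xbar. \<Sum>j<?m. fbar k f j x))
      = (1 / real T) * ((\<integral>r. A r \<partial>M) - (INF x\<in>Xbar. \<Sum>j<?m. fbar k f j x))"
    by (simp add: AB)
  also have "\<dots> \<le> (1 / real T) * ((\<integral>r. A r \<partial>M) - C)"
    using CI assms(4) by (intro mult_left_mono) auto
  also have "\<dots> \<le> R" by (rule hyp)
  also have "\<dots> \<le> R + n / sqrt (real k * real T)" using n by simp
  finally show ?thesis .
qed

end
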